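(* Let $n\ge1$ and define $\phi(x_j)=I_{n+1}+E_{j+1,j}$ and $\phi(y_j)=I_{n+1}+E_{j,j+1}$ in $\mathrm{GL}_{n+1}(\mathbb{F}_2)$ for $1\le j\le n$. Then the map $\phi$ on $\{x_1,\dots,x_n,y_1,\dots,y_n\}$ extends to a group homomorphism $\phi\colon\langle A_{2,n}\rangle\to\mathrm{GL}_{n+1}(\mathbb{F}_2)$.
   Context: $E_{i,j}$ is the matrix with $1$ in row $i$, column $j$ and $0$ elsewhere. The group $\langle A_{2,n}\rangle$ has generators $X=\{x_1,\dots,x_n,y_1,\dots,y_n\}$ and defining relations: $z^2=e$ for all $z\in X$; $(x_ix_{i+1})^4=(y_iy_{i+1})^4=e$ for $1\le i\le n-1$; $(x_iy_i)^3=e$ for $1\le i\le n$; $(zt)^2=e$ for every other pair of distinct $z,t\in X$; $(x_ix_{i+1}y_i)^3=(x_ix_{i+1}y_{i+1})^3=(x_iy_iy_{i+1})^3=(x_{i+1}y_iy_{i+1})^3=e$ for $1\le i\le n-1$; and $(x_ix_{i+1}x_{i+2})^4=(y_iy_{i+1}y_{i+2})^4=e$ for $1\le i\le n-2$. *)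

theory Defs
  imports "HOL-Algebra.Group" "HOL-Library.Z2" "Jordan_Normal_Form.Matrix"
begin

text \<open>Letters of a word: a generator together with a flag (True = generator,
False = its formal inverse).\<close>

type_synonym 'g letter = "'g \<times> bool"

inductive_set pres_rel :: "'g set \<Rightarrow> 'g letter list set \<Rightarrow> ('g letter list \<times> 'g letter list) set"
  for X :: "'g set" and R :: "'g letter list set" where
  pres_refl: "w \<in> lists (X \<times> UNIV) \<Longrightarrow> (w, w) \<in> pres_rel X R"
| pres_sym: "(u, v) \<in> pres_rel X R \<Longrightarrow> (v, u) \<in> pres_rel X R"
| pres_trans: "(u, v) \<in> pres_rel X R \<Longrightarrow> (v, w) \<in> pres_rel X R \<Longrightarrow> (u, w) \<in> pres_rel X R"
| pres_cancel: "x \<in> X \<Longrightarrow> ([(x, b), (x, \<not> b)], []) \<in> pres_rel X R"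
| pres_relator: "r \<in> R \<Longrightarrow> (r, []) \<in> pres_rel X R"
| pres_cong: "(u, v) \<in> pres_rel X R \<Longrightarrow> a \<in> lists (X \<times> UNIV) \<Longrightarrow> b \<in> lists (X \<times> UNIV)
      \<Longrightarrow> (a @ u @ b, a @ v @ b) \<in> pres_rel X R"

definition presented_group :: "'g set \<Rightarrow> 'g letter list set \<Rightarrow> 'g letter list set monoid" where
  "presented_group X R = \<lparr>
     carrier = lists (X \<times> UNIV) // pres_rel X R,
     mult = (\<lambda>A B. pres_rel X R `` {a @ b | a b. a \<in> A \<and> b \<in> B}),
     one = pres_rel X R `` {[]} \<rparr>"

definition gen_class :: "'g set \<Rightarrow> 'g letter list set \<Rightarrow> 'g \<Rightarrow> 'g letter list set" where
  "gen_class X R x = pres_rel X R `` {[(x, True)]}"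

text \<open>Generators: \<open>Inl j\<close> stands for \<open>x_j\<close>, \<open>Inr j\<close> for \<open>y_j\<close>, \<open>1 \<le> j \<le> n\<close>.\<close>

definition A2_gens :: "nat \<Rightarrow> (nat + nat) set" where
  "A2_gens n = Inl ` {1..n} \<union> Inr ` {1..n}"

definition lt :: "nat + nat \<Rightarrow> (nat + nat) letter" where
  "lt z = (z, True)"

definition wpow :: "'a list \<Rightarrow> nat \<Rightarrow> 'a list" where
  "wpow w k = concat (replicate k w)"

definition A2_special_pair :: "nat \<Rightarrow> nat + nat \<Rightarrow> nat + nat \<Rightarrow> bool" where
  "A2_special_pair n z t \<longleftrightarrow>
     (\<exists>i. 1 \<le> i \<and> i \<le> n - 1 \<and>
        ({z, t} = {Inl i, Inl (i+1)} \<or> {z, t} = {Inr i, Inr (i+1)}))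
   \<or> (\<exists>i. 1 \<le> i \<and> i \<le> n \<and> {z, t} = {Inl i, Inr i})"

definition A2_relators :: "nat \<Rightarrow> (nat + nat) letter list set" where
  "A2_relators n =
     {wpow [lt z] 2 | z. z \<in> A2_gens n}
   \<union> {wpow [lt (Inl i), lt (Inl (i+1))] 4 | i. 1 \<le> i \<and> i \<le> n - 1}
   \<union> {wpow [lt (Inr i), lt (Inr (i+1))] 4 | i. 1 \<le> i \<and> i \<le> n - 1}
   \<union> {wpow [lt (Inl i), lt (Inr i)] 3 | i. 1 \<le> i \<and> i \<le> n}
   \<union> {wpow [lt z, lt t] 2 | z t. z \<in> A2_gens n \<and> t \<in> A2_gens n \<and> z \<noteq> t
        \<and> \<not> A2_special_pair n z t}
   \<union> {wpow [lt (Inl i), lt (Inl (i+1)), lt (Inr i)] 3 | i. 1 \<le> i \<and> i \<le> n - 1}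
   \<union> {wpow [lt (Inl i), lt (Inl (i+1)), lt (Inr (i+1))] 3 | i. 1 \<le> i \<and> i \<le> n - 1}
   \<union> {wpow [lt (Inl i), lt (Inr i), lt (Inr (i+1))] 3 | i. 1 \<le> i \<and> i \<le> n - 1}
   \<union> {wpow [lt (Inl (i+1)), lt (Inr i), lt (Inr (i+1))] 3 | i. 1 \<le> i \<and> i \<le> n - 1}
   \<union> {wpow [lt (Inl i), lt (Inl (i+1)), lt (Inl (i+2))] 4 | i. 1 \<le> i \<and> i \<le> n - 2}
   \<union> {wpow [lt (Inr i), lt (Inr (i+1)), lt (Inr (i+2))] 4 | i. 1 \<le> i \<and> i \<le> n - 2}"

definition A2_group :: "nat \<Rightarrow> (nat + nat) letter list set monoid" where
  "A2_group n = presented_group (A2_gens n) (A2_relators n)"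

text \<open>GL_m(F_2): the units of the ring of m\<times>m matrices over \<open>bit\<close> (= F_2).\<close>

definition GL2 :: "nat \<Rightarrow> bit mat monoid" where
  "GL2 m = units_of (ring_mat TYPE(bit) m ())"

text \<open>Elementary matrix \<open>E_{i,j}\<close> of size m, with 1-based indices.\<close>

definition E_mat :: "nat \<Rightarrow> nat \<Rightarrow> nat \<Rightarrow> bit mat" where
  "E_mat m i j = mat m m (\<lambda>(a, b). if a = i - 1 \<and> b = j - 1 then 1 else 0)"

definition phi_gen :: "nat \<Rightarrow> nat + nat \<Rightarrow> bit mat" where
  "phi_gen n z = (case z of
      Inl j \<Rightarrow> 1\<^sub>m (n+1) + E_mat (n+1) (j+1) j
    | Inr j \<Rightarrow> 1\<^sub>m (n+1) + E_mat (n+1) j (j+1))"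

end

theory Submission
  imports Defs
begin


definition ev :: "('a, 'c) monoid_scheme \<Rightarrow> 'g set \<Rightarrow> ('g \<Rightarrow> 'a) \<Rightarrow> 'g letter list \<Rightarrow> 'a" where
  "ev G X f w = foldr (\<lambda>(x,b) acc. (if x \<in> X then (if b then f x else inv\<^bsub>G\<^esub> f x) else \<one>\<^bsub>G\<^esub>) \<otimes>\<^bsub>G\<^esub> acc) w \<one>\<^bsub>G\<^esub>"

lemma ev_Nil[simp]: "ev G X f [] = \<one>\<^bsub>G\<^esub>" by (simp add: ev_def)
lemma ev_Cons[simp]: "ev G X f ((x,b) # w) = (if x \<in> X then (if b then f x else inv\<^bsub>G\<^esub> f x) else \<one>\<^bsub>G\<^esub>) \<otimes>\<^bsub>G\<^esub> ev G X f w"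
  by (simp add: ev_def)

context group begin

lemma ev_carrier: "f ` X \<subseteq> carrier G \<Longrightarrow> ev G X f w \<in> carrier G"
  by (induction w) (auto simp: image_subset_iff)

lemma ev_append: "f ` X \<subseteq> carrier G \<Longrightarrow> ev G X f (u @ v) = ev G X f u \<otimes> ev G X f v"
  by (induction u) (auto simp: ev_carrier m_assoc image_subset_iff)

lemma ev_rel:
  assumes fX: "f ` X \<subseteq> carrier G" and R: "\<And>r. r \<in> R \<Longrightarrow> ev G X f r = \<one>"
  shows "(u, v) \<in> pres_rel X R \<Longrightarrow> ev G X f u = ev G X f v"
proof (induction rule: pres_rel.induct)
  case (pres_cancel x b)
  then show ?case using fX by (cases b) auto
next
  case (pres_relator r)
  then show ?case using R by simp
next
  case (pres_cong u v a b)
  then show ?case by (simp add: ev_append[OF fX])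
qed auto

lemma presentation_hom:
  assumes fX: "f ` X \<subseteq> carrier G" and R: "\<And>r. r \<in> R \<Longrightarrow> ev G X f r = \<one>"
  shows "\<exists>h. h \<in> hom (presented_group X R) G \<and> (\<forall>x\<in>X. h (gen_class X R x) = f x)"
proof -
  let ?rel = "pres_rel X R"
  define h where "h A = ev G X f (SOME w. w \<in> A)" for A
  have key: "h A = c" if "a \<in> A" "\<And>w. w \<in> A \<Longrightarrow> ev G X f w = c" for A a c
    unfolding h_def by (rule that(2), rule someI[of _ a], rule that(1))
  have cls: "a \<in> ?rel `` {a}" "\<And>w. w \<in> ?rel `` {a} \<Longrightarrow> ev G X f w = ev G X f a"
    if "a \<in> lists (X \<times> UNIV)" for a
    using that ev_rel[OF fX R] by (auto intro: pres_refl)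
  have hA: "h (?rel `` {a}) = ev G X f a" if "a \<in> lists (X \<times> UNIV)" for a
    using key cls[OF that] by blast
  show ?thesis
  proof (intro exI conjI ballI)
    show "h \<in> hom (presented_group X R) G"
    proof (rule homI)
      fix A assume "A \<in> carrier (presented_group X R)"
      then obtain a where a: "a \<in> lists (X \<times> UNIV)" "A = ?rel `` {a}"
        by (auto simp: presented_group_def quotient_def)
      then show "h A \<in> carrier G" using hA ev_carrier[OF fX] by simp
    next
      fix A B assume "A \<in> carrier (presented_group X R)" "B \<in> carrier (presented_group X R)"
      then obtain a b where a: "a \<in> lists (X \<times> UNIV)" "A = ?rel `` {a}"
        and b: "b \<in> lists (X \<times> UNIV)" "B = ?rel `` {b}"
        by (auto simp: presented_group_def quotient_def)
      have ab: "a @ b \<in> lists (X \<times> UNIV)" using a b by auto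
      have "h (A \<otimes>\<^bsub>presented_group X R\<^esub> B) = ev G X f a \<otimes> ev G X f b"
      proof (rule key)
        show "a @ b \<in> A \<otimes>\<^bsub>presented_group X R\<^esub> B"
          using cls(1)[OF a(1)] cls(1)[OF b(1)] pres_refl[OF ab] a b
          by (auto simp: presented_group_def)
      next
        fix w assume "w \<in> A \<otimes>\<^bsub>presented_group X R\<^esub> B"
        then obtain a' b' where "a' \<in> A" "b' \<in> B" "(a' @ b', w) \<in> ?rel"
          by (auto simp: presented_group_def)
        then show "ev G X f w = ev G X f a \<otimes> ev G X f b"
          using ev_rel[OF fX R] cls(2)[OF a(1)] cls(2)[OF b(1)] a b
          by (metis ev_append[OF fX])
      qed
      then show "h (A \<otimes>\<^bsub>presented_group X R\<^esub> B) = h A \<otimes> h B"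
        using hA a b by simp
    qed
  next
    fix x assume "x \<in> X"
    then have "[(x, True)] \<in> lists (X \<times> UNIV)" by auto
    then show "h (gen_class X R x) = f x"
      using hA `x \<in> X` fX by (auto simp: gen_class_def)
  qed
qed

end


definition RO :: "nat \<Rightarrow> nat \<Rightarrow> nat \<Rightarrow> bit mat \<Rightarrow> bit mat" where
  "RO m a b M = mat m m (\<lambda>(r,c). M$$(r,c) + (if r = a then M$$(b,c) else 0))"

lemma RO_idx[simp]: "r < m \<Longrightarrow> c < m \<Longrightarrow> RO m a b M $$ (r,c) = M$$(r,c) + (if r = a then M$$(b,c) else 0)"
  by (simp add: RO_def)

lemma RO_carrier[simp]: "RO m a b M \<in> carrier_mat m m"
  by (simp add: RO_def)

lemma RO_dim[simp]: "dim_row (RO m a b M) = m" "dim_col (RO m a b M) = m"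
  by (simp_all add: RO_def)

lemma E_mat_carrier[simp]: "E_mat m i j \<in> carrier_mat m m"
  by (simp add: E_mat_def)

lemma E_mat_dim[simp]: "dim_row (E_mat m i j) = m" "dim_col (E_mat m i j) = m"
  by (simp_all add: E_mat_def)

lemma E_mult:
  assumes "1 \<le> i" "i \<le> m" "1 \<le> j" "j \<le> m" "M \<in> carrier_mat m m"
  shows "(1\<^sub>m m + E_mat m i j) * M = RO m (i-1) (j-1) M"
proof (rule eq_matI)
  fix r c assume rc: "r < dim_row (RO m (i-1) (j-1) M)" "c < dim_col (RO m (i-1) (j-1) M)"
  then have r: "r < m" and c: "c < m" by auto
  have "((1\<^sub>m m + E_mat m i j) * M) $$ (r,c) =
        (\<Sum>k\<in>{0..<m}. (1\<^sub>m m + E_mat m i j) $$ (r,k) * M $$ (k,c))"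
    using r c assms(5) by (auto simp add: scalar_prod_def simp del: add_bit_eq_xor mult_bit_eq_and intro!: sum.cong)
  also have "\<dots> = (\<Sum>k\<in>{0..<m}. (if k = r then M $$ (k,c) else 0) + (if k = j - 1 then (if r = i - 1 then M $$ (k,c) else 0) else 0))"
    by (rule sum.cong) (use r in \<open>auto simp: E_mat_def\<close>)
  also have "\<dots> = M$$(r,c) + (if r = i - 1 then M$$(j-1,c) else 0)"
    using r assms by (simp only: sum.distrib sum.delta finite_atLeastLessThan) simp
  finally show "((1\<^sub>m m + E_mat m i j) * M) $$ (r,c) = RO m (i-1) (j-1) M $$ (r,c)"
    using r c by simp
qed (use assms in auto)

lemma phi_carrier[simp]: "phi_gen n z \<in> carrier_mat (Suc n) (Suc n)"
  by (cases z) (auto simp: phi_gen_def)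

lemma phi_Inl_mult[simp]: "1 \<le> j \<Longrightarrow> j \<le> n \<Longrightarrow> M \<in> carrier_mat (Suc n) (Suc n) \<Longrightarrow>
  phi_gen n (Inl j) * M = RO (Suc n) j (j-1) M"
  by (simp add: phi_gen_def E_mult)

lemma phi_Inr_mult[simp]: "1 \<le> j \<Longrightarrow> j \<le> n \<Longrightarrow> M \<in> carrier_mat (Suc n) (Suc n) \<Longrightarrow>
  phi_gen n (Inr j) * M = RO (Suc n) (j-1) j M"
  by (simp add: phi_gen_def E_mult)

lemma phi_sq: assumes "z \<in> A2_gens n" shows "phi_gen n z * phi_gen n z = 1\<^sub>m (Suc n)"
proof -
  have "phi_gen n z * phi_gen n z = phi_gen n z * (phi_gen n z * 1\<^sub>m (Suc n))"
    using phi_carrier[of n z] by (metis right_mult_one_mat)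
  also have "\<dots> = 1\<^sub>m (Suc n)"
    using assms by (auto simp: A2_gens_def) (rule eq_matI; auto)+
  finally show ?thesis .
qed

lemma monoid_ring_mat: "monoid (ring_mat TYPE(bit) m ())"
  by (rule ring.is_monoid[OF ring_mat])

lemma GL2_group: "group (GL2 m)"
  unfolding GL2_def by (rule monoid.units_group[OF monoid_ring_mat])

lemma GL2_simps[simp]: "mult (GL2 m) = (*)" "one (GL2 m) = 1\<^sub>m m"
  by (simp_all add: GL2_def units_of_mult units_of_one ring_mat_simps)

lemma phi_in_GL2: "z \<in> A2_gens n \<Longrightarrow> phi_gen n z \<in> carrier (GL2 (n+1))"
  unfolding GL2_def units_of_carrier Units_def
  using phi_sq[of z n] by (auto simp: ring_mat_simps)



lemma r2: assumes "1 \<le> i" "i \<le> n - 1" "1 \<le> n" shows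
  "ev (GL2 (n+1)) (A2_gens n) (phi_gen n) (wpow [lt (Inl i), lt (Inl (i+1))] 4) = \<one>\<^bsub>GL2 (n+1)\<^esub>"
proof -
  obtain p where p: "i = Suc p" using assms by (cases i) auto
  show ?thesis using assms unfolding p
    by (simp add: wpow_def lt_def A2_gens_def numeral_eq_Suc del: right_mult_one_mat') (rule eq_matI; auto simp: algebra_simps)
qed

lemma r2_set: assumes "r \<in> {wpow [lt (Inl i), lt (Inl (i+1))] 4 | i. 1 \<le> i \<and> i \<le> n - 1}" "1 \<le> n"
  shows "ev (GL2 (n+1)) (A2_gens n) (phi_gen n) r = \<one>\<^bsub>GL2 (n+1)\<^esub>"
  using assms r2 by blast

lemma r3: assumes "1 \<le> i" "i \<le> n - 1" "1 \<le> n" shows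
  "ev (GL2 (n+1)) (A2_gens n) (phi_gen n) (wpow [lt (Inr i), lt (Inr (i+1))] 4) = \<one>\<^bsub>GL2 (n+1)\<^esub>"
proof -
  obtain p where p: "i = Suc p" using assms by (cases i) auto
  show ?thesis using assms unfolding p
    by (simp add: wpow_def lt_def A2_gens_def numeral_eq_Suc del: right_mult_one_mat') (rule eq_matI; auto simp: algebra_simps)
qed

lemma r3_set: assumes "r \<in> {wpow [lt (Inr i), lt (Inr (i+1))] 4 | i. 1 \<le> i \<and> i \<le> n - 1}" "1 \<le> n"
  shows "ev (GL2 (n+1)) (A2_gens n) (phi_gen n) r = \<one>\<^bsub>GL2 (n+1)\<^esub>"
  using assms r3 by blast

lemma r4: assumes "1 \<le> i" "i \<le> n" "1 \<le> n" shows
  "ev (GL2 (n+1)) (A2_gens n) (phi_gen n) (wpow [lt (Inl i), lt (Inr i)] 3) = \<one>\<^bsub>GL2 (n+1)\<^esub>"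
proof -
  obtain p where p: "i = Suc p" using assms by (cases i) auto
  show ?thesis using assms unfolding p
    by (simp add: wpow_def lt_def A2_gens_def numeral_eq_Suc del: right_mult_one_mat') (rule eq_matI; auto simp: algebra_simps)
qed

lemma r4_set: assumes "r \<in> {wpow [lt (Inl i), lt (Inr i)] 3 | i. 1 \<le> i \<and> i \<le> n}" "1 \<le> n"
  shows "ev (GL2 (n+1)) (A2_gens n) (phi_gen n) r = \<one>\<^bsub>GL2 (n+1)\<^esub>"
  using assms r4 by blast

lemma r6: assumes "1 \<le> i" "i \<le> n - 1" "1 \<le> n" shows
  "ev (GL2 (n+1)) (A2_gens n) (phi_gen n) (wpow [lt (Inl i), lt (Inl (i+1)), lt (Inr i)] 3) = \<one>\<^bsub>GL2 (n+1)\<^esub>"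
proof -
  obtain p where p: "i = Suc p" using assms by (cases i) auto
  show ?thesis using assms unfolding p
    by (simp add: wpow_def lt_def A2_gens_def numeral_eq_Suc del: right_mult_one_mat') (rule eq_matI; auto simp: algebra_simps)
qed

lemma r6_set: assumes "r \<in> {wpow [lt (Inl i), lt (Inl (i+1)), lt (Inr i)] 3 | i. 1 \<le> i \<and> i \<le> n - 1}" "1 \<le> n"
  shows "ev (GL2 (n+1)) (A2_gens n) (phi_gen n) r = \<one>\<^bsub>GL2 (n+1)\<^esub>"
  using assms r6 by blast

lemma r7: assumes "1 \<le> i" "i \<le> n - 1" "1 \<le> n" shows
  "ev (GL2 (n+1)) (A2_gens n) (phi_gen n) (wpow [lt (Inl i), lt (Inl (i+1)), lt (Inr (i+1))] 3) = \<one>\<^bsub>GL2 (n+1)\<^esub>"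
proof -
  obtain p where p: "i = Suc p" using assms by (cases i) auto
  show ?thesis using assms unfolding p
    by (simp add: wpow_def lt_def A2_gens_def numeral_eq_Suc del: right_mult_one_mat') (rule eq_matI; auto simp: algebra_simps)
qed

lemma r7_set: assumes "r \<in> {wpow [lt (Inl i), lt (Inl (i+1)), lt (Inr (i+1))] 3 | i. 1 \<le> i \<and> i \<le> n - 1}" "1 \<le> n"
  shows "ev (GL2 (n+1)) (A2_gens n) (phi_gen n) r = \<one>\<^bsub>GL2 (n+1)\<^esub>"
  using assms r7 by blast

lemma r8: assumes "1 \<le> i" "i \<le> n - 1" "1 \<le> n" shows
  "ev (GL2 (n+1)) (A2_gens n) (phi_gen n) (wpow [lt (Inl i), lt (Inr i), lt (Inr (i+1))] 3) = \<one>\<^bsub>GL2 (n+1)\<^esub>"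
proof -
  obtain p where p: "i = Suc p" using assms by (cases i) auto
  show ?thesis using assms unfolding p
    by (simp add: wpow_def lt_def A2_gens_def numeral_eq_Suc del: right_mult_one_mat') (rule eq_matI; auto simp: algebra_simps)
qed

lemma r8_set: assumes "r \<in> {wpow [lt (Inl i), lt (Inr i), lt (Inr (i+1))] 3 | i. 1 \<le> i \<and> i \<le> n - 1}" "1 \<le> n"
  shows "ev (GL2 (n+1)) (A2_gens n) (phi_gen n) r = \<one>\<^bsub>GL2 (n+1)\<^esub>"
  using assms r8 by blast

lemma r9: assumes "1 \<le> i" "i \<le> n - 1" "1 \<le> n" shows
  "ev (GL2 (n+1)) (A2_gens n) (phi_gen n) (wpow [lt (Inl (i+1)), lt (Inr i), lt (Inr (i+1))] 3) = \<one>\<^bsub>GL2 (n+1)\<^esub>"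
proof -
  obtain p where p: "i = Suc p" using assms by (cases i) auto
  show ?thesis using assms unfolding p
    by (simp add: wpow_def lt_def A2_gens_def numeral_eq_Suc del: right_mult_one_mat') (rule eq_matI; auto simp: algebra_simps)
qed

lemma r9_set: assumes "r \<in> {wpow [lt (Inl (i+1)), lt (Inr i), lt (Inr (i+1))] 3 | i. 1 \<le> i \<and> i \<le> n - 1}" "1 \<le> n"
  shows "ev (GL2 (n+1)) (A2_gens n) (phi_gen n) r = \<one>\<^bsub>GL2 (n+1)\<^esub>"
  using assms r9 by blast

lemma r10: assumes "1 \<le> i" "i \<le> n - 2" "1 \<le> n" shows
  "ev (GL2 (n+1)) (A2_gens n) (phi_gen n) (wpow [lt (Inl i), lt (Inl (i+1)), lt (Inl (i+2))] 4) = \<one>\<^bsub>GL2 (n+1)\<^esub>"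
proof -
  obtain p where p: "i = Suc p" using assms by (cases i) auto
  show ?thesis using assms unfolding p
    by (simp add: wpow_def lt_def A2_gens_def numeral_eq_Suc del: right_mult_one_mat') (rule eq_matI; auto simp: algebra_simps)
qed

lemma r10_set: assumes "r \<in> {wpow [lt (Inl i), lt (Inl (i+1)), lt (Inl (i+2))] 4 | i. 1 \<le> i \<and> i \<le> n - 2}" "1 \<le> n"
  shows "ev (GL2 (n+1)) (A2_gens n) (phi_gen n) r = \<one>\<^bsub>GL2 (n+1)\<^esub>"
  using assms r10 by blast

lemma r11: assumes "1 \<le> i" "i \<le> n - 2" "1 \<le> n" shows
  "ev (GL2 (n+1)) (A2_gens n) (phi_gen n) (wpow [lt (Inr i), lt (Inr (i+1)), lt (Inr (i+2))] 4) = \<one>\<^bsub>GL2 (n+1)\<^esub>"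
proof -
  obtain p where p: "i = Suc p" using assms by (cases i) auto
  show ?thesis using assms unfolding p
    by (simp add: wpow_def lt_def A2_gens_def numeral_eq_Suc del: right_mult_one_mat') (rule eq_matI; auto simp: algebra_simps)
qed

lemma r11_set: assumes "r \<in> {wpow [lt (Inr i), lt (Inr (i+1)), lt (Inr (i+2))] 4 | i. 1 \<le> i \<and> i \<le> n - 2}" "1 \<le> n"
  shows "ev (GL2 (n+1)) (A2_gens n) (phi_gen n) r = \<one>\<^bsub>GL2 (n+1)\<^esub>"
  using assms r11 by blast

lemma r1: assumes "z \<in> A2_gens n" shows "ev (GL2 (n+1)) (A2_gens n) (phi_gen n) (wpow [lt z] 2) = \<one>\<^bsub>GL2 (n+1)\<^esub>"
  proof -
  have "phi_gen n z * 1\<^sub>m (Suc n) = phi_gen n z" using phi_carrier[of n z] by (rule right_mult_one_mat)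
  then show ?thesis using assms phi_sq[OF assms] by (auto simp: wpow_def lt_def numeral_eq_Suc)
qed

lemma r1_set: assumes "r \<in> {wpow [lt z] 2 | z. z \<in> A2_gens n}" shows "ev (GL2 (n+1)) (A2_gens n) (phi_gen n) r = \<one>\<^bsub>GL2 (n+1)\<^esub>"
  using assms r1 by blast

lemma cLL: assumes "q \<noteq> Suc p" "p \<noteq> Suc q" "p \<noteq> q" "Suc p \<le> n" "Suc q \<le> n"
  shows "ev (GL2 (n+1)) (A2_gens n) (phi_gen n) (wpow [lt (Inl (Suc p)), lt (Inl (Suc q))] 2) = \<one>\<^bsub>GL2 (n+1)\<^esub>"
  using assms by (simp add: wpow_def lt_def A2_gens_def numeral_eq_Suc del: right_mult_one_mat') (rule eq_matI; auto simp: algebra_simps)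

lemma cRR: assumes "q \<noteq> Suc p" "p \<noteq> Suc q" "p \<noteq> q" "Suc p \<le> n" "Suc q \<le> n"
  shows "ev (GL2 (n+1)) (A2_gens n) (phi_gen n) (wpow [lt (Inr (Suc p)), lt (Inr (Suc q))] 2) = \<one>\<^bsub>GL2 (n+1)\<^esub>"
  using assms by (simp add: wpow_def lt_def A2_gens_def numeral_eq_Suc del: right_mult_one_mat') (rule eq_matI; auto simp: algebra_simps)

lemma cLR: assumes "p \<noteq> q" "Suc p \<le> n" "Suc q \<le> n"
  shows "ev (GL2 (n+1)) (A2_gens n) (phi_gen n) (wpow [lt (Inl (Suc p)), lt (Inr (Suc q))] 2) = \<one>\<^bsub>GL2 (n+1)\<^esub>"
  using assms by (simp add: wpow_def lt_def A2_gens_def numeral_eq_Suc del: right_mult_one_mat') (rule eq_matI; auto simp: algebra_simps)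

lemma cRL: assumes "p \<noteq> q" "Suc p \<le> n" "Suc q \<le> n"
  shows "ev (GL2 (n+1)) (A2_gens n) (phi_gen n) (wpow [lt (Inr (Suc p)), lt (Inl (Suc q))] 2) = \<one>\<^bsub>GL2 (n+1)\<^esub>"
  using assms by (simp add: wpow_def lt_def A2_gens_def numeral_eq_Suc del: right_mult_one_mat') (rule eq_matI; auto simp: algebra_simps)

lemma r5: assumes "z \<in> A2_gens n" "t \<in> A2_gens n" "z \<noteq> t" "\<not> A2_special_pair n z t"
  shows "ev (GL2 (n+1)) (A2_gens n) (phi_gen n) (wpow [lt z, lt t] 2) = \<one>\<^bsub>GL2 (n+1)\<^esub>"
proof (cases z)
  case (Inl a) note z = this
  show ?thesis
  proof (cases t)
    case (Inl b) note t = this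
      obtain p where p: "a = Suc p" using assms(1) z by (cases a) (auto simp: A2_gens_def)
      obtain q where q: "b = Suc q" using assms(2) t by (cases b) (auto simp: A2_gens_def)
      have "b \<noteq> a + 1"
      proof (rule ccontr)
        assume "\<not> (b \<noteq> a + 1)"
        then have "A2_special_pair n z t" unfolding A2_special_pair_def using assms(1,2) z t
          by (intro disjI1 exI[of _ a]) (auto simp: A2_gens_def )
        then show False using assms(4) by simp
      qed
      moreover have "a \<noteq> b + 1"
      proof (rule ccontr)
        assume "\<not> (a \<noteq> b + 1)"
        then have "A2_special_pair n z t" unfolding A2_special_pair_def using assms(1,2) z t
          by (intro disjI1 exI[of _ b]) (auto simp: A2_gens_def insert_commute)
        then show False using assms(4) by simp
      qed
      ultimately have "b \<noteq> a + 1 \<and> a \<noteq> b + 1" by simp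
      then show ?thesis using assms cLL[of q p n] cLL[of p q n] unfolding z t p q by (auto simp: A2_gens_def)
  next
    case (Inr b) note t = this
      obtain p where p: "a = Suc p" using assms(1) z by (cases a) (auto simp: A2_gens_def)
      obtain q where q: "b = Suc q" using assms(2) t by (cases b) (auto simp: A2_gens_def)
      have "a \<noteq> b"
      proof (rule ccontr)
        assume "\<not> (a \<noteq> b)"
        then have "A2_special_pair n z t" unfolding A2_special_pair_def using assms(1,2) z t
          by (intro disjI2 exI[of _ a]) (auto simp: A2_gens_def )
        then show False using assms(4) by simp
      qed
      then show ?thesis using assms cLR[of q p n] cLR[of p q n] unfolding z t p q by (auto simp: A2_gens_def)
  qed
next
  case (Inr a) note z = this
  show ?thesis
  proof (cases t)
    case (Inl b) note t = this
      obtain p where p: "a = Suc p" using assms(1) z by (cases a) (auto simp: A2_gens_def)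
      obtain q where q: "b = Suc q" using assms(2) t by (cases b) (auto simp: A2_gens_def)
      have "a \<noteq> b"
      proof (rule ccontr)
        assume "\<not> (a \<noteq> b)"
        then have "A2_special_pair n z t" unfolding A2_special_pair_def using assms(1,2) z t
          by (intro disjI2 exI[of _ a]) (auto simp: A2_gens_def insert_commute)
        then show False using assms(4) by simp
      qed
      then show ?thesis using assms cRL[of q p n] cRL[of p q n] unfolding z t p q by (auto simp: A2_gens_def)
  next
    case (Inr b) note t = this
      obtain p where p: "a = Suc p" using assms(1) z by (cases a) (auto simp: A2_gens_def)
      obtain q where q: "b = Suc q" using assms(2) t by (cases b) (auto simp: A2_gens_def)
      have "b \<noteq> a + 1"
      proof (rule ccontr)
        assume "\<not> (b \<noteq> a + 1)"
        then have "A2_special_pair n z t" unfolding A2_special_pair_def using assms(1,2) z t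
          by (intro disjI1 exI[of _ a]) (auto simp: A2_gens_def )
        then show False using assms(4) by simp
      qed
      moreover have "a \<noteq> b + 1"
      proof (rule ccontr)
        assume "\<not> (a \<noteq> b + 1)"
        then have "A2_special_pair n z t" unfolding A2_special_pair_def using assms(1,2) z t
          by (intro disjI1 exI[of _ b]) (auto simp: A2_gens_def insert_commute)
        then show False using assms(4) by simp
      qed
      ultimately have "b \<noteq> a + 1 \<and> a \<noteq> b + 1" by simp
      then show ?thesis using assms cRR[of q p n] cRR[of p q n] unfolding z t p q by (auto simp: A2_gens_def)
  qed
qed

lemma r5_set: assumes "r \<in> {wpow [lt z, lt t] 2 | z t. z \<in> A2_gens n \<and> t \<in> A2_gens n \<and> z \<noteq> t
        \<and> \<not> A2_special_pair n z t}" shows "ev (GL2 (n+1)) (A2_gens n) (phi_gen n) r = \<one>\<^bsub>GL2 (n+1)\<^esub>"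
  using assms r5 by blast

lemma all_rels: assumes "r \<in> A2_relators n" "1 \<le> n" shows "ev (GL2 (n+1)) (A2_gens n) (phi_gen n) r = \<one>\<^bsub>GL2 (n+1)\<^esub>"
  using assms(1) unfolding A2_relators_def
  apply (elim UnE)
  apply (erule r1_set)
  apply (erule r2_set, rule assms(2))
  apply (erule r3_set, rule assms(2))
  apply (erule r4_set, rule assms(2))
  apply (erule r5_set)
  apply (erule r6_set, rule assms(2))
  apply (erule r7_set, rule assms(2))
  apply (erule r8_set, rule assms(2))
  apply (erule r9_set, rule assms(2))
  apply (erule r10_set, rule assms(2))
  apply (erule r11_set, rule assms(2))
  done


theorem proposition2:
  fixes n :: nat
  assumes "n \<ge> 1"
  shows "\<exists>h. h \<in> hom (A2_group n) (GL2 (n+1)) \<and>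
           (\<forall>z \<in> A2_gens n. h (gen_class (A2_gens n) (A2_relators n) z) = phi_gen n z)"
proof -
  interpret G: group "GL2 (n+1)" by (rule GL2_group)
  have fX: "phi_gen n ` A2_gens n \<subseteq> carrier (GL2 (n+1))" using phi_in_GL2 by blast
  have R: "\<And>r. r \<in> A2_relators n \<Longrightarrow> ev (GL2 (n+1)) (A2_gens n) (phi_gen n) r = \<one>\<^bsub>GL2 (n+1)\<^esub>"
    using all_rels assms by blast
  show ?thesis using G.presentation_hom[OF fX R] unfolding A2_group_def by blast
qed

end
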